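(* Let $R$ be a unital regular $K$-algebra, $J$ an ideal of $R$, and $T$ a matricial subalgebra of $R$ such that $R = T \oplus J$ as $K$-vector spaces. Then for every finite subset $Y \subseteq J$ there is an idempotent $e \in J$ such that $Y \subseteq eJe$ and $et = te$ for all $t \in T$.
   Context: $K$ is a field. All algebras are associative $K$-algebras; ideals are two-sided ring ideals that are $K$-subspaces. A ring is regular if for every $x$ there is $y$ with $xyx=x$. A $K$-algebra is matricial if it is isomorphic to $\prod_{i=1}^k M_{n_i}(K)$ for some positive integers $n_1,\dots,n_k$. The subalgebra $T$ need not share the identity of $R$. *)

theory Defs
  imports Main "Jordan_Normal_Form.Matrix"
begin

definition is_algebra :: "('k::field \<Rightarrow> 'r::ring_1 \<Rightarrow> 'r) \<Rightarrow> bool" where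
  "is_algebra sm \<longleftrightarrow> vector_space sm \<and>
     (\<forall>a x y. sm a (x * y) = sm a x * y \<and> sm a (x * y) = x * sm a y)"

definition regular_ring :: "'r::ring_1 itself \<Rightarrow> bool" where
  "regular_ring _ \<longleftrightarrow> (\<forall>x::'r. \<exists>y. x * y * x = x)"

definition alg_ideal :: "('k::field \<Rightarrow> 'r::ring_1 \<Rightarrow> 'r) \<Rightarrow> 'r set \<Rightarrow> bool" where
  "alg_ideal sm J \<longleftrightarrow> module.subspace sm J \<and>
     (\<forall>x\<in>J. \<forall>r. r * x \<in> J \<and> x * r \<in> J)"

text \<open>Subalgebra (not required to contain the identity of R).\<close>
definition subalgebra :: "('k::field \<Rightarrow> 'r::ring_1 \<Rightarrow> 'r) \<Rightarrow> 'r set \<Rightarrow> bool" where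
  "subalgebra sm T \<longleftrightarrow> module.subspace sm T \<and> (\<forall>x\<in>T. \<forall>y\<in>T. x * y \<in> T)"

text \<open>The K-algebra M_{n_0}(K) x ... x M_{n_{k-1}}(K), represented as lists of
  square matrices of the given sizes, with componentwise operations.\<close>
definition matrix_product_carrier :: "nat list \<Rightarrow> 'k::field mat list set" where
  "matrix_product_carrier ns =
     {As. length As = length ns \<and> (\<forall>i<length ns. As ! i \<in> carrier_mat (ns ! i) (ns ! i))}"

definition matricial :: "('k::field \<Rightarrow> 'r::ring_1 \<Rightarrow> 'r) \<Rightarrow> 'r set \<Rightarrow> bool" where
  "matricial sm T \<longleftrightarrow>
     (\<exists>(ns::nat list) (\<phi>::'r \<Rightarrow> 'k mat list).
        (\<forall>i<length ns. ns ! i > 0) \<and>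
        bij_betw \<phi> T (matrix_product_carrier ns) \<and>
        (\<forall>x\<in>T. \<forall>y\<in>T. \<forall>i<length ns.
            \<phi> (x + y) ! i = \<phi> x ! i + \<phi> y ! i \<and>
            \<phi> (x * y) ! i = \<phi> x ! i * \<phi> y ! i) \<and>
        (\<forall>a. \<forall>x\<in>T. \<forall>i<length ns. \<phi> (sm a x) ! i = a \<cdot>\<^sub>m (\<phi> x ! i)))"

end

theory Submission
  imports Defs
begin


lemma left_units:
  fixes J :: "'r::ring_1 set" and c :: 'r
  assumes reg: "\<forall>x::'r. \<exists>y. x * y * x = x"
    and J0: "0 \<in> J" and Jadd: "\<And>x y. x \<in> J \<Longrightarrow> y \<in> J \<Longrightarrow> x + y \<in> J"
    and Jdiff: "\<And>x y. x \<in> J \<Longrightarrow> y \<in> J \<Longrightarrow> x - y \<in> J"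
    and Jl: "\<And>x r. x \<in> J \<Longrightarrow> r * x \<in> J" and Jr: "\<And>x r. x \<in> J \<Longrightarrow> x * r \<in> J"
    and cc: "c * c = c"
    and fin: "finite A"
  shows "(\<forall>a\<in>A. a \<in> J \<and> c * a = a) \<Longrightarrow> \<exists>p\<in>J. p * p = p \<and> c * p = p \<and> p * c = p \<and> (\<forall>a\<in>A. p * a = a)"
  using fin
proof (induction A rule: finite_induct)
  case empty
  then show ?case using J0 by (intro bexI[of _ 0]) auto
next
  case (insert a A)
  then obtain p where pJ: "p \<in> J" and pp: "p * p = p" and cp: "c * p = p" and pc: "p * c = p"
    and pA: "\<forall>a\<in>A. p * a = a" by auto
  have aJ: "a \<in> J" and ca: "c * a = a" using insert.prems by auto
  define b where "b = a - p * a"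
  have bJ: "b \<in> J" unfolding b_def using aJ Jl Jdiff by auto
  have cb: "c * b = b" unfolding b_def using ca cp
    by (metis mult.assoc right_diff_distrib)
  have pb: "p * b = 0" unfolding b_def using pp
    by (metis mult.assoc right_diff_distrib diff_self)
  obtain x where bxb: "b * x * b = b" using reg by blast
  define q where "q = b * x * c"
  have qJ: "q \<in> J" unfolding q_def using bJ Jr by auto
  have cq: "c * q = q" unfolding q_def using cb by (metis mult.assoc)
  have qc: "q * c = q" unfolding q_def using cc by (metis mult.assoc)
  have qb: "q * b = b" unfolding q_def using cb bxb by (metis mult.assoc)
  have qq: "q * q = q" unfolding q_def using cb bxb by (metis mult.assoc)
  have pq: "p * q = 0" unfolding q_def using pb by (metis mult.assoc mult_zero_left)
  define f where "f = p + q - q * p"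
  have fJ: "f \<in> J" unfolding f_def using pJ qJ Jadd Jdiff Jl by auto
  have ff: "f * f = f" unfolding f_def
    by (simp add: algebra_simps pp qq pq flip: mult.assoc)
       (simp add: mult.assoc pq pp)
  have cf: "c * f = f" unfolding f_def using cp cq
    by (simp add: algebra_simps flip: mult.assoc)
  have fc: "f * c = f" unfolding f_def using pc qc
    by (simp add: algebra_simps mult.assoc)
  have fp: "f * p = p" unfolding f_def using pp pq
    by (simp add: algebra_simps flip: mult.assoc) (simp add: mult.assoc)
  have fb: "f * b = b" unfolding f_def using pb qb
    by (simp add: algebra_simps flip: mult.assoc) (simp add: mult.assoc)
  have "a = p * a + b" unfolding b_def by simp
  then have fa: "f * a = a" using fp fb by (metis distrib_left mult.assoc)
  have "\<forall>a'\<in>A. f * a' = a'" using pA fp by (metis mult.assoc)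
  then show ?case using fJ ff cf fc fa by auto
qed

lemma right_units:
  fixes J :: "'r::ring_1 set" and c :: 'r
  assumes reg: "\<forall>x::'r. \<exists>y. x * y * x = x"
    and J0: "0 \<in> J" and Jadd: "\<And>x y. x \<in> J \<Longrightarrow> y \<in> J \<Longrightarrow> x + y \<in> J"
    and Jdiff: "\<And>x y. x \<in> J \<Longrightarrow> y \<in> J \<Longrightarrow> x - y \<in> J"
    and Jl: "\<And>x r. x \<in> J \<Longrightarrow> r * x \<in> J" and Jr: "\<And>x r. x \<in> J \<Longrightarrow> x * r \<in> J"
    and cc: "c * c = c"
    and fin: "finite A"
  shows "(\<forall>a\<in>A. a \<in> J \<and> a * c = a) \<Longrightarrow> \<exists>p\<in>J. p * p = p \<and> c * p = p \<and> p * c = p \<and> (\<forall>a\<in>A. a * p = a)"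
  using fin
proof (induction A rule: finite_induct)
  case empty
  then show ?case using J0 by (intro bexI[of _ 0]) auto
next
  case (insert a A)
  then obtain p where pJ: "p \<in> J" and pp: "p * p = p" and cp: "c * p = p" and pc: "p * c = p"
    and pA: "\<forall>a\<in>A. a * p = a" by auto
  have aJ: "a \<in> J" and ca: "a * c = a" using insert.prems by auto
  define b where "b = a - a * p"
  have bJ: "b \<in> J" unfolding b_def using aJ Jr Jdiff by auto
  have cb: "b * c = b" unfolding b_def using ca pc
    by (metis mult.assoc left_diff_distrib)
  have pb: "b * p = 0" unfolding b_def using pp
    by (metis mult.assoc left_diff_distrib diff_self)
  obtain x where bxb: "b * x * b = b" using reg by blast
  define q where "q = c * x * b"
  have qJ: "q \<in> J" unfolding q_def using bJ Jl by auto
  have cq: "q * c = q" unfolding q_def using cb by (metis mult.assoc)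
  have qc: "c * q = q" unfolding q_def using cc by (metis mult.assoc)
  have qb: "b * q = b" unfolding q_def using cb bxb by (metis mult.assoc)
  have qq: "q * q = q" unfolding q_def using cb bxb by (metis mult.assoc)
  have pq: "q * p = 0" unfolding q_def using pb by (metis mult.assoc mult_zero_right)
  define f where "f = p + q - p * q"
  have fJ: "f \<in> J" unfolding f_def using pJ qJ Jadd Jdiff Jl by auto
  have ff: "f * f = f" unfolding f_def
    by (simp add: algebra_simps pp qq pq flip: mult.assoc)
       (simp add: mult.assoc pq pp qq)
  have cf: "c * f = f" unfolding f_def using cp qc
    by (simp add: algebra_simps flip: mult.assoc)
  have fc: "f * c = f" unfolding f_def using pc cq
    by (simp add: algebra_simps mult.assoc)
  have fp: "p * f = p" unfolding f_def using pp pq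
    by (simp add: algebra_simps pp flip: mult.assoc)
  have fb: "b * f = b" unfolding f_def using pb qb
    by (simp add: algebra_simps pb qb flip: mult.assoc)
  have "a = a * p + b" unfolding b_def by simp
  then have fa: "a * f = a" using fp fb by (metis distrib_right mult.assoc)
  have "\<forall>a'\<in>A. a' * f = a'" using pA fp by (metis mult.assoc)
  then show ?case using fJ ff cf fc fa by auto
qed

lemma corner_units:
  fixes J :: "'r::ring_1 set" and c :: 'r
  assumes reg: "\<forall>x::'r. \<exists>y. x * y * x = x"
    and J0: "0 \<in> J" and Jadd: "\<And>x y. x \<in> J \<Longrightarrow> y \<in> J \<Longrightarrow> x + y \<in> J"
    and Jdiff: "\<And>x y. x \<in> J \<Longrightarrow> y \<in> J \<Longrightarrow> x - y \<in> J"
    and Jl: "\<And>x r. x \<in> J \<Longrightarrow> r * x \<in> J" and Jr: "\<And>x r. x \<in> J \<Longrightarrow> x * r \<in> J"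
    and cc: "c * c = c"
    and finL: "finite L" and L: "\<forall>a\<in>L. a \<in> J \<and> c * a = a"
    and finR: "finite R" and R: "\<forall>a\<in>R. a \<in> J \<and> a * c = a"
  shows "\<exists>e\<in>J. e * e = e \<and> c * e = e \<and> e * c = e \<and> (\<forall>a\<in>L. e * a = a) \<and> (\<forall>a\<in>R. a * e = a)"
proof -
  obtain p where pJ: "p \<in> J" and pp: "p * p = p" and cp: "c * p = p" and pc: "p * c = p"
    and pL: "\<forall>a\<in>L. p * a = a"
    using left_units[OF reg J0 Jadd Jdiff Jl Jr cc finL] L by blast
  obtain r where rJ: "r \<in> J" and rr: "r * r = r" and cr: "c * r = r" and rc: "r * c = r"
    and rR: "\<forall>a\<in>insert p R. a * r = a"
    using right_units[OF reg J0 Jadd Jdiff Jl Jr cc, of "insert p R"] finR R pJ pc by blast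
  have pr: "p * r = p" using rR by auto
  define e where "e = p + r - r * p"
  have eJ: "e \<in> J" unfolding e_def using pJ rJ Jadd Jdiff Jl by auto
  have ee: "e * e = e" unfolding e_def
    by (simp add: algebra_simps pp rr pr flip: mult.assoc)
       (simp add: mult.assoc pr pp)
  have ce: "c * e = e" unfolding e_def using cp cr
    by (simp add: algebra_simps flip: mult.assoc)
  have ec: "e * c = e" unfolding e_def using pc rc
    by (simp add: algebra_simps mult.assoc)
  have eL: "\<forall>a\<in>L. e * a = a" unfolding e_def using pL
    by (simp add: algebra_simps mult.assoc)
  have eR: "\<forall>a\<in>R. a * e = a" unfolding e_def using rR
    by (simp add: algebra_simps flip: mult.assoc)
  show ?thesis using eJ ee ce ec eL eR by auto
qed



lemma mat_mult_entry:
  fixes A B :: "'k::field mat"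
  assumes "A \<in> carrier_mat N N" "B \<in> carrier_mat N N" "r < N" "s < N"
  shows "(A * B) $$ (r,s) = (\<Sum>t<N. A $$ (r,t) * B $$ (t,s))"
  using assms by (auto simp: scalar_prod_def lessThan_atLeast0 intro!: sum.cong)

locale matr =
  fixes sm :: "'k::field \<Rightarrow> 'r::ring_1 \<Rightarrow> 'r" and T :: "'r set"
    and ns :: "nat list" and \<phi> :: "'r \<Rightarrow> 'k mat list"
  assumes pos: "\<forall>i<length ns. ns!i > 0"
   and bij: "bij_betw \<phi> T (matrix_product_carrier ns)"
   and hom: "\<forall>x\<in>T. \<forall>y\<in>T. \<forall>i<length ns. \<phi> (x + y) ! i = \<phi> x ! i + \<phi> y ! i \<and> \<phi> (x * y) ! i = \<phi> x ! i * \<phi> y ! i"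
   and smh: "\<forall>a. \<forall>x\<in>T. \<forall>i<length ns. \<phi> (sm a x) ! i = a \<cdot>\<^sub>m (\<phi> x ! i)"
   and T0: "0 \<in> T" and Tadd: "\<And>x y. x\<in>T \<Longrightarrow> y\<in>T \<Longrightarrow> x+y\<in>T"
   and Tsm: "\<And>x a. x\<in>T \<Longrightarrow> sm a x \<in> T"
   and Tmul: "\<And>x y. x\<in>T \<Longrightarrow> y\<in>T \<Longrightarrow> x*y\<in>T"
   and smr: "\<And>a x y. sm a (x*y) = sm a x * y" "\<And>a x y. sm a (x*y) = x * sm a y"
begin

abbreviation "n \<equiv> length ns"

definition stdm :: "nat \<Rightarrow> nat \<Rightarrow> nat \<Rightarrow> 'k mat" where
  "stdm m i j = mat m m (\<lambda>(a,b). if a = i \<and> b = j then 1 else 0)"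

definition M :: "nat \<Rightarrow> nat \<Rightarrow> nat \<Rightarrow> 'k mat list" where
  "M k i j = map (\<lambda>p. if p = k then stdm (ns!p) i j else 0\<^sub>m (ns!p) (ns!p)) [0..<n]"

definition eu :: "nat \<Rightarrow> nat \<Rightarrow> nat \<Rightarrow> 'r" where
  "eu k i j = inv_into T \<phi> (M k i j)"

lemma phi_carrier: "x \<in> T \<Longrightarrow> length (\<phi> x) = n"
  "x \<in> T \<Longrightarrow> p < n \<Longrightarrow> \<phi> x ! p \<in> carrier_mat (ns!p) (ns!p)"
  using bij unfolding bij_betw_def matrix_product_carrier_def by auto

lemma psi: "X \<in> matrix_product_carrier ns \<Longrightarrow> inv_into T \<phi> X \<in> T \<and> \<phi> (inv_into T \<phi> X) = X"
  using bij by (metis bij_betw_def bij_betw_inv_into_right inv_into_into)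

lemma ext:
  assumes "x \<in> T" "y \<in> T"
    and "\<And>p r s. p < n \<Longrightarrow> r < ns!p \<Longrightarrow> s < ns!p \<Longrightarrow> \<phi> x ! p $$ (r,s) = \<phi> y ! p $$ (r,s)"
  shows "x = y"
proof -
  have "\<phi> x = \<phi> y"
  proof (rule nth_equalityI)
    show "length (\<phi> x) = length (\<phi> y)" using phi_carrier assms by simp
    fix p assume "p < length (\<phi> x)"
    then have p: "p < n" using phi_carrier assms by simp
    show "\<phi> x ! p = \<phi> y ! p"
      using phi_carrier(2)[OF assms(1) p] phi_carrier(2)[OF assms(2) p] assms(3)[OF p]
      by (intro eq_matI) auto
  qed
  moreover have "inj_on \<phi> T" using bij by (simp add: bij_betw_def)
  ultimately show ?thesis using assms(1,2) by (simp add: inj_on_def)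
qed

lemma M_carrier: "M k i j \<in> matrix_product_carrier ns"
  unfolding M_def matrix_product_carrier_def stdm_def by auto

lemma M_entry: "p < n \<Longrightarrow> r < ns!p \<Longrightarrow> s < ns!p \<Longrightarrow>
   M k i j ! p $$ (r,s) = (if p = k \<and> r = i \<and> s = j then 1 else 0)"
  unfolding M_def stdm_def by auto

lemma eu_T: "eu k i j \<in> T" and phi_eu: "\<phi> (eu k i j) = M k i j"
  using psi[OF M_carrier] unfolding eu_def by auto

lemma phi0: "p < n \<Longrightarrow> r < ns!p \<Longrightarrow> s < ns!p \<Longrightarrow> \<phi> 0 ! p $$ (r,s) = 0"
proof -
  assume a: "p < n" "r < ns!p" "s < ns!p"
  have "\<phi> (0 + 0) ! p = \<phi> 0 ! p + \<phi> 0 ! p" using hom T0 a by blast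
  then have "\<phi> 0 ! p $$ (r,s) = (\<phi> 0 ! p + \<phi> 0 ! p) $$ (r,s)" by (metis add_0)
  also have "\<dots> = \<phi> 0 ! p $$ (r,s) + \<phi> 0 ! p $$ (r,s)"
    using phi_carrier(2)[OF T0 a(1)] a by (intro index_add_mat(1)) auto
  finally show ?thesis by (metis add_cancel_right_right)
qed

lemma phi_mult_entry: "x \<in> T \<Longrightarrow> y \<in> T \<Longrightarrow> p < n \<Longrightarrow> r < ns!p \<Longrightarrow> s < ns!p \<Longrightarrow>
   \<phi> (x * y) ! p $$ (r,s) = (\<Sum>t<ns!p. \<phi> x ! p $$ (r,t) * \<phi> y ! p $$ (t,s))"
proof -
  assume a: "x \<in> T" "y \<in> T" "p < n" "r < ns!p" "s < ns!p"
  have "\<phi> (x * y) ! p = \<phi> x ! p * \<phi> y ! p" using hom a by blast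
  then show ?thesis using mat_mult_entry[OF phi_carrier(2)[OF a(1,3)] phi_carrier(2)[OF a(2,3)] a(4,5)] by simp
qed

lemma eu_mult:
  assumes "k < n" "i < ns!k" "j < ns!k" "k' < n" "l < ns!k'" "m < ns!k'"
  shows "eu k i j * eu k' l m = (if k = k' \<and> j = l then eu k i m else 0)"
proof (rule ext)
  show "eu k i j * eu k' l m \<in> T" using Tmul eu_T by auto
  show "(if k = k' \<and> j = l then eu k i m else 0) \<in> T" using T0 eu_T by auto
  fix p r s assume a: "p < n" "r < ns!p" "s < ns!p"
  have "\<phi> (eu k i j * eu k' l m) ! p $$ (r,s)
     = (\<Sum>t<ns!p. (if p = k \<and> r = i \<and> t = j then 1 else 0) * (if p = k' \<and> t = l \<and> s = m then 1 else 0))"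
    using phi_mult_entry[OF eu_T eu_T a] a by (simp add: phi_eu M_entry)
  also have "\<dots> = (\<Sum>t<ns!p. if t = j then (if p = k \<and> r = i \<and> p = k' \<and> j = l \<and> s = m then 1 else 0) else 0)"
    by (intro sum.cong) auto
  also have "\<dots> = (if p = k \<and> r = i \<and> p = k' \<and> j = l \<and> s = m then 1 else 0)"
    using assms by (auto simp: sum.delta)
  also have "\<dots> = \<phi> (if k = k' \<and> j = l then eu k i m else 0) ! p $$ (r,s)"
    using a by (auto simp: phi_eu M_entry phi0)
  finally show "\<phi> (eu k i j * eu k' l m) ! p $$ (r,s) = \<phi> (if k = k' \<and> j = l then eu k i m else 0) ! p $$ (r,s)" .
qed

definition Q :: "(nat \<times> nat \<times> nat) set" where
  "Q = Sigma {..<n} (\<lambda>k. {..<ns!k} \<times> {..<ns!k})"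

lemma finQ: "finite Q" unfolding Q_def by auto

lemma phi_sum:
  assumes "finite A" "\<forall>a\<in>A. g a \<in> T"
  shows "sum g A \<in> T \<and> (\<forall>p<n. \<forall>r<ns!p. \<forall>s<ns!p. \<phi> (sum g A) ! p $$ (r,s) = (\<Sum>a\<in>A. \<phi> (g a) ! p $$ (r,s)))"
  using assms
proof (induction A rule: finite_induct)
  case empty
  then show ?case using T0 phi0 by auto
next
  case (insert a A)
  then have gA: "sum g A \<in> T" and ga: "g a \<in> T" by auto
  have "\<forall>p<n. \<forall>r<ns!p. \<forall>s<ns!p. \<phi> (g a + sum g A) ! p $$ (r,s) = \<phi> (g a) ! p $$ (r,s) + \<phi> (sum g A) ! p $$ (r,s)"
    using hom gA ga phi_carrier(2)[OF gA] by (metis carrier_matD index_add_mat(1))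
  then show ?case using insert gA ga Tadd by auto
qed

lemma span:
  assumes t: "t \<in> T"
  shows "t = (\<Sum>(k,i,j)\<in>Q. sm (\<phi> t ! k $$ (i,j)) (eu k i j))"
proof (rule ext[OF t])
  let ?g = "\<lambda>(k,i,j). sm (\<phi> t ! k $$ (i,j)) (eu k i j)"
  have gT: "\<forall>a\<in>Q. ?g a \<in> T" using Tsm eu_T by auto
  show "(\<Sum>(k,i,j)\<in>Q. sm (\<phi> t ! k $$ (i,j)) (eu k i j)) \<in> T" using phi_sum[OF finQ gT] by simp
  fix p r s assume a: "p < n" "r < ns!p" "s < ns!p"
  have "\<phi> (\<Sum>(k,i,j)\<in>Q. sm (\<phi> t ! k $$ (i,j)) (eu k i j)) ! p $$ (r,s)
    = (\<Sum>x\<in>Q. \<phi> (?g x) ! p $$ (r,s))" using phi_sum[OF finQ gT] a by simp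
  also have "\<dots> = (\<Sum>x\<in>Q. if x = (p,r,s) then \<phi> t ! p $$ (r,s) else 0)"
  proof (intro sum.cong refl)
    fix x assume "x \<in> Q"
    then obtain k i j where x: "x = (k,i,j)" by (cases x) auto
    have d: "dim_row (M k i j ! p) = ns!p" "dim_col (M k i j ! p) = ns!p"
      using a unfolding M_def stdm_def by auto
    have "\<phi> (?g x) = \<phi> (sm (\<phi> t ! k $$ (i,j)) (eu k i j))" unfolding x by simp
    then have "\<phi> (?g x) ! p = (\<phi> t ! k $$ (i,j)) \<cdot>\<^sub>m (M k i j ! p)"
      using smh eu_T a(1) by (simp add: phi_eu)
    then have "\<phi> (?g x) ! p $$ (r,s) = (\<phi> t ! k $$ (i,j)) * (M k i j ! p $$ (r,s))"
      using d a by simp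
    then show "\<phi> (?g x) ! p $$ (r,s) = (if x = (p,r,s) then \<phi> t ! p $$ (r,s) else 0)"
      using a x by (auto simp: M_entry)
  qed
  also have "\<dots> = \<phi> t ! p $$ (r,s)"
  proof -
    have "(p,r,s) \<in> Q" using a by (simp add: Q_def)
    then show ?thesis using finQ by (simp add: sum.delta')
  qed
  finally show "\<phi> t ! p $$ (r, s) = \<phi> (\<Sum>(k,i,j)\<in>Q. sm (\<phi> t ! k $$ (i,j)) (eu k i j)) ! p $$ (r,s)" by simp
qed

lemma commute:
  assumes "\<And>k i j. k < n \<Longrightarrow> i < ns!k \<Longrightarrow> j < ns!k \<Longrightarrow> e * eu k i j = eu k i j * e"
    and t: "t \<in> T"
  shows "e * t = t * e"
proof -
  have "e * t = (\<Sum>(k,i,j)\<in>Q. e * sm (\<phi> t ! k $$ (i,j)) (eu k i j))"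
    by (subst span[OF t]) (simp add: sum_distrib_left case_prod_unfold)
  also have "\<dots> = (\<Sum>(k,i,j)\<in>Q. sm (\<phi> t ! k $$ (i,j)) (eu k i j) * e)"
    using assms(1) by (intro sum.cong refl) (auto simp: Q_def simp flip: smr)
  also have "\<dots> = t * e"
    by (subst (2) span[OF t]) (simp add: sum_distrib_right case_prod_unfold)
  finally show ?thesis .
qed

end


lemma sum_in:
  assumes "0 \<in> S" "\<And>x y. x \<in> S \<Longrightarrow> y \<in> S \<Longrightarrow> x + y \<in> S" "\<forall>a\<in>A. g a \<in> S"
  shows "sum g A \<in> S"
proof (cases "finite A")
  case True
  then show ?thesis using assms(3) by (induction A rule: finite_induct) (auto intro: assms(1,2))
qed (simp add: assms(1))

theorem proposition3p3:
  fixes sm :: "'k::field \<Rightarrow> 'r::ring_1 \<Rightarrow> 'r"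
    and J T :: "'r set"
  assumes alg: "is_algebra sm"
    and reg: "regular_ring TYPE('r)"
    and ideal: "alg_ideal sm J"
    and sub: "subalgebra sm T"
    and mat: "matricial sm T"
    and sum: "\<forall>x. \<exists>t\<in>T. \<exists>j\<in>J. x = t + j"
    and direct: "T \<inter> J = {0}"
  shows "\<forall>Y. finite Y \<and> Y \<subseteq> J \<longrightarrow>
           (\<exists>e\<in>J. e * e = e \<and> Y \<subseteq> {e * j * e | j. j \<in> J} \<and> (\<forall>t\<in>T. e * t = t * e))"
proof (intro allI impI)
  fix Y assume Y: "finite Y \<and> Y \<subseteq> J"
  have modsm: "Modules.module sm" using alg by (simp add: is_algebra_def module_iff_vector_space)
  have reg': "\<forall>x::'r. \<exists>y. x * y * x = x" using reg by (simp add: regular_ring_def)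
  have J0: "0 \<in> J" and Jadd: "\<And>x y. x \<in> J \<Longrightarrow> y \<in> J \<Longrightarrow> x + y \<in> J"
    and Jl: "\<And>x r. x \<in> J \<Longrightarrow> r * x \<in> J" and Jr: "\<And>x r. x \<in> J \<Longrightarrow> x * r \<in> J"
    using ideal unfolding alg_ideal_def module.subspace_def[OF modsm] by auto
  have Jdiff: "\<And>x y. x \<in> J \<Longrightarrow> y \<in> J \<Longrightarrow> x - y \<in> J"
  proof -
    fix x y assume "x \<in> J" "y \<in> J"
    then have "x + (-1) * y \<in> J" using Jadd Jl by blast
    then show "x - y \<in> J" by simp
  qed
  have T0: "0 \<in> T" and Tadd: "\<And>x y. x \<in> T \<Longrightarrow> y \<in> T \<Longrightarrow> x + y \<in> T"
    and Tsm: "\<And>x a. x \<in> T \<Longrightarrow> sm a x \<in> T" and Tmul: "\<And>x y. x\<in>T \<Longrightarrow> y\<in>T \<Longrightarrow> x*y\<in>T"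
    using sub unfolding subalgebra_def module.subspace_def[OF modsm] by auto
  have smr: "\<And>a x y. sm a (x*y) = sm a x * y" "\<And>a x y. sm a (x*y) = x * sm a y"
    using alg unfolding is_algebra_def by metis+
  obtain ns and \<phi> :: "'r \<Rightarrow> 'k mat list" where
     pos: "\<forall>i<length ns. ns!i > 0"
   and bij: "bij_betw \<phi> T (matrix_product_carrier ns)"
   and hom: "\<forall>x\<in>T. \<forall>y\<in>T. \<forall>i<length ns. \<phi> (x + y) ! i = \<phi> x ! i + \<phi> y ! i \<and> \<phi> (x * y) ! i = \<phi> x ! i * \<phi> y ! i"
   and smh: "\<forall>a. \<forall>x\<in>T. \<forall>i<length ns. \<phi> (sm a x) ! i = a \<cdot>\<^sub>m (\<phi> x ! i)"
    using mat unfolding matricial_def by blast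
  interpret matr sm T ns \<phi>
    using pos bij hom smh T0 Tadd Tsm Tmul smr by unfold_locales auto
  define P where "P = Sigma {..<n} (\<lambda>k. {..<ns!k})"
  have finP: "finite P" unfolding P_def by auto
  define u where "u = (\<Sum>(k,i)\<in>P. eu k i i)"
  have uE: "u * eu k a b = eu k a b \<and> eu k a b * u = eu k a b"
    if k: "k < n" "a < ns!k" "b < ns!k" for k a b
  proof
    have "u * eu k a b = (\<Sum>x\<in>P. if x = (k,a) then eu k a b else 0)"
      unfolding u_def sum_distrib_right
      by (intro sum.cong refl) (auto simp: P_def eu_mult k split: if_splits)
    also have "\<dots> = eu k a b" using finP k by (simp add: sum.delta' P_def)
    finally show "u * eu k a b = eu k a b" .
    have "eu k a b * u = (\<Sum>x\<in>P. if x = (k,b) then eu k a b else 0)"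
      unfolding u_def sum_distrib_left
      by (intro sum.cong refl) (auto simp: P_def eu_mult k split: if_splits)
    also have "\<dots> = eu k a b" using finP k by (simp add: sum.delta' P_def)
    finally show "eu k a b * u = eu k a b" .
  qed
  have uu: "u * u = u"
  proof -
    have "u * u = u * (\<Sum>(k,i)\<in>P. eu k i i)" unfolding u_def by (rule refl)
    also have "\<dots> = (\<Sum>(k,i)\<in>P. u * eu k i i)" by (simp add: sum_distrib_left case_prod_unfold)
    also have "\<dots> = (\<Sum>(k,i)\<in>P. eu k i i)" by (intro sum.cong refl) (auto simp: P_def uE)
    finally show ?thesis unfolding u_def .
  qed
  define v where "v = 1 - u"
  have vv: "v * v = v" unfolding v_def by (simp add: algebra_simps uu)
  have vE: "v * eu k a b = 0 \<and> eu k a b * v = 0" if "k < n" "a < ns!k" "b < ns!k" for k a b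
    using uE[OF that] unfolding v_def by (simp add: algebra_simps)
  have eu00: "eu k 0 0 * eu k 0 0 = eu k 0 0" if "k < n" for k
    using that pos by (simp add: eu_mult)
  have Yfin: "finite Y" and YJ: "Y \<subseteq> J" using Y by auto
  define Pk where "Pk = (\<lambda>k f. f \<in> J \<and> f * f = f \<and> eu k 0 0 * f = f \<and> f * eu k 0 0 = f \<and>
     (\<forall>i<ns!k. \<forall>y\<in>Y. f * (eu k 0 i * y) = eu k 0 i * y \<and> (y * eu k i 0) * f = y * eu k i 0))"
  have ex: "\<exists>f. Pk k f" if k: "k < n" for k
  proof -
    have k0: "0 < ns!k" using pos k by auto
    have "\<exists>e\<in>J. e * e = e \<and> eu k 0 0 * e = e \<and> e * eu k 0 0 = e \<and>
       (\<forall>a\<in>(\<lambda>(i,y). eu k 0 i * y) ` ({..<ns!k} \<times> Y). e * a = a) \<and>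
       (\<forall>a\<in>(\<lambda>(i,y). y * eu k i 0) ` ({..<ns!k} \<times> Y). a * e = a)"
    proof (rule corner_units[OF reg' J0 Jadd Jdiff Jl Jr eu00[OF k]])
      show "finite ((\<lambda>(i,y). eu k 0 i * y) ` ({..<ns!k} \<times> Y))" using Yfin by auto
      show "finite ((\<lambda>(i,y). y * eu k i 0) ` ({..<ns!k} \<times> Y))" using Yfin by auto
      show "\<forall>a\<in>(\<lambda>(i,y). eu k 0 i * y) ` ({..<ns!k} \<times> Y). a \<in> J \<and> eu k 0 0 * a = a"
        using YJ k k0 Jl by (auto simp: eu_mult simp flip: mult.assoc)
      show "\<forall>a\<in>(\<lambda>(i,y). y * eu k i 0) ` ({..<ns!k} \<times> Y). a \<in> J \<and> a * eu k 0 0 = a"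
        using YJ k k0 Jr by (auto simp: eu_mult mult.assoc)
    qed
    then show ?thesis unfolding Pk_def by auto
  qed
  have "\<forall>k. \<exists>f. k < n \<longrightarrow> Pk k f" using ex by blast
  then obtain fk where fk: "\<And>k. k < n \<Longrightarrow> Pk k (fk k)" by metis
  have "\<exists>e\<in>J. e * e = e \<and> v * e = e \<and> e * v = e \<and>
       (\<forall>a\<in>(\<lambda>y. v * y) ` Y. e * a = a) \<and> (\<forall>a\<in>(\<lambda>y. y * v) ` Y. a * e = a)"
  proof (rule corner_units[OF reg' J0 Jadd Jdiff Jl Jr vv])
    show "finite ((\<lambda>y. v * y) ` Y)" "finite ((\<lambda>y. y * v) ` Y)" using Yfin by auto
    show "\<forall>a\<in>(\<lambda>y. v * y) ` Y. a \<in> J \<and> v * a = a" using YJ Jl vv by (auto simp flip: mult.assoc)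
    show "\<forall>a\<in>(\<lambda>y. y * v) ` Y. a \<in> J \<and> a * v = a" using YJ Jr vv by (auto simp: mult.assoc)
  qed
  then obtain f0 where f0J: "f0 \<in> J" and f0f0: "f0 * f0 = f0" and vf0: "v * f0 = f0" and f0v: "f0 * v = f0"
    and f0L: "\<And>y. y \<in> Y \<Longrightarrow> f0 * (v * y) = v * y" and f0R: "\<And>y. y \<in> Y \<Longrightarrow> (y * v) * f0 = y * v"
    by auto
  define e where "e = (\<Sum>(k,i)\<in>P. eu k i 0 * fk k * eu k 0 i) + f0"
  have PM: "\<And>k i. (k,i) \<in> P \<longleftrightarrow> k < n \<and> i < ns!k" by (simp add: P_def)
  have fkJ: "fk k \<in> J" and fkc: "fk k * eu k 0 0 = fk k" and cfk: "eu k 0 0 * fk k = fk k"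
    and fkfk: "fk k * fk k = fk k"
    and fkL: "\<And>i y. i < ns!k \<Longrightarrow> y \<in> Y \<Longrightarrow> fk k * (eu k 0 i * y) = eu k 0 i * y"
    and fkR: "\<And>i y. i < ns!k \<Longrightarrow> y \<in> Y \<Longrightarrow> (y * eu k i 0) * fk k = y * eu k i 0"
    if "k < n" for k using fk[OF that] unfolding Pk_def by auto
  have eE: "e * eu k a b = eu k a 0 * fk k * eu k 0 b \<and> eu k a b * e = eu k a 0 * fk k * eu k 0 b"
    if k: "k < n" "a < ns!k" "b < ns!k" for k a b
  proof
    have k0: "0 < ns!k" using pos k by auto
    have "f0 * eu k a b = f0 * (v * eu k a b)" using f0v by (metis mult.assoc)
    then have f0e: "f0 * eu k a b = 0" using vE[OF k] by simp
    have "e * eu k a b = (\<Sum>x\<in>P. (case x of (k',i) \<Rightarrow> eu k' i 0 * fk k' * eu k' 0 i) * eu k a b) + f0 * eu k a b"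
      unfolding e_def by (simp add: distrib_right sum_distrib_right)
    also have "\<dots> = (\<Sum>x\<in>P. if x = (k,a) then eu k a 0 * fk k * eu k 0 b else 0)"
      unfolding f0e add_0_right
    proof (intro sum.cong refl)
      fix x assume "x \<in> P"
      then obtain k' i where x: "x = (k',i)" and k': "k' < n" "i < ns!k'" using PM by (cases x) auto
      have "eu k' i 0 * fk k' * eu k' 0 i * eu k a b = eu k' i 0 * fk k' * (eu k' 0 i * eu k a b)"
        by (simp add: mult.assoc)
      also have "\<dots> = (if x = (k,a) then eu k a 0 * fk k * eu k 0 b else 0)"
        using k k' pos x by (auto simp: eu_mult)
      finally show "(case x of (k',i) \<Rightarrow> eu k' i 0 * fk k' * eu k' 0 i) * eu k a b =
         (if x = (k,a) then eu k a 0 * fk k * eu k 0 b else 0)" using x by simp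
    qed
    also have "\<dots> = eu k a 0 * fk k * eu k 0 b" using finP k PM by (simp add: sum.delta')
    finally show "e * eu k a b = eu k a 0 * fk k * eu k 0 b" .
    have "eu k a b * f0 = (eu k a b * v) * f0" using vf0 by (metis mult.assoc)
    then have ef0: "eu k a b * f0 = 0" using vE[OF k] by simp
    have "eu k a b * e = (\<Sum>x\<in>P. eu k a b * (case x of (k',i) \<Rightarrow> eu k' i 0 * fk k' * eu k' 0 i)) + eu k a b * f0"
      unfolding e_def by (simp add: distrib_left sum_distrib_left)
    also have "\<dots> = (\<Sum>x\<in>P. if x = (k,b) then eu k a 0 * fk k * eu k 0 b else 0)"
      unfolding ef0 add_0_right
    proof (intro sum.cong refl)
      fix x assume "x \<in> P"
      then obtain k' i where x: "x = (k',i)" and k': "k' < n" "i < ns!k'" using PM by (cases x) auto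
      have "eu k a b * (eu k' i 0 * fk k' * eu k' 0 i) = (eu k a b * eu k' i 0) * fk k' * eu k' 0 i"
        by (simp add: mult.assoc)
      also have "\<dots> = (if x = (k,b) then eu k a 0 * fk k * eu k 0 b else 0)"
        using k k' pos x by (auto simp: eu_mult)
      finally show "eu k a b * (case x of (k',i) \<Rightarrow> eu k' i 0 * fk k' * eu k' 0 i) =
         (if x = (k,b) then eu k a 0 * fk k * eu k 0 b else 0)" using x by simp
    qed
    also have "\<dots> = eu k a 0 * fk k * eu k 0 b" using finP k PM by (simp add: sum.delta')
    finally show "eu k a b * e = eu k a 0 * fk k * eu k 0 b" .
  qed
  have commT: "\<forall>t\<in>T. e * t = t * e"
    using commute eE by metis
  have termJ: "\<forall>x\<in>P. (case x of (k,i) \<Rightarrow> eu k i 0 * fk k * eu k 0 i) \<in> J"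
    using PM fkJ Jl Jr by auto
  have eJ: "e \<in> J" unfolding e_def
    by (intro Jadd f0J sum_in[OF J0 Jadd]) (use termJ in auto)
  have tv: "eu k i 0 * fk k * eu k 0 i * v = 0 \<and> v * (eu k i 0 * fk k * eu k 0 i) = 0"
    if "(k,i) \<in> P" for k i
  proof -
    have k: "k < n" "i < ns!k" "0 < ns!k" using that PM pos by auto
    have "eu k i 0 * fk k * eu k 0 i * v = eu k i 0 * fk k * (eu k 0 i * v)" by (simp add: mult.assoc)
    moreover have "v * (eu k i 0 * fk k * eu k 0 i) = (v * eu k i 0) * fk k * eu k 0 i" by (simp add: mult.assoc)
    ultimately show ?thesis using vE k by simp
  qed
  have Sv: "(\<Sum>(k,i)\<in>P. eu k i 0 * fk k * eu k 0 i) * v = 0"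
    using tv by (simp add: sum_distrib_right case_prod_unfold)
  have vS: "v * (\<Sum>(k,i)\<in>P. eu k i 0 * fk k * eu k 0 i) = 0"
    using tv by (simp add: sum_distrib_left case_prod_unfold)
  have ef0: "e * f0 = f0"
  proof -
    have "e * f0 = (\<Sum>(k,i)\<in>P. eu k i 0 * fk k * eu k 0 i) * v * f0 + f0 * f0"
      unfolding e_def using vf0 by (simp add: distrib_right mult.assoc)
    then show ?thesis using Sv f0f0 by simp
  qed
  have ee: "e * e = e"
  proof -
    have "e * e = (\<Sum>x\<in>P. e * (case x of (k,i) \<Rightarrow> eu k i 0 * fk k * eu k 0 i)) + e * f0"
    proof -
      have "e * e = e * (\<Sum>(k,i)\<in>P. eu k i 0 * fk k * eu k 0 i) + e * f0"
        by (subst (2) e_def) (simp add: distrib_left)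
      then show ?thesis by (simp add: sum_distrib_left)
    qed
    also have "\<dots> = (\<Sum>x\<in>P. (case x of (k,i) \<Rightarrow> eu k i 0 * fk k * eu k 0 i)) + f0"
      unfolding ef0
    proof (intro arg_cong2[where f="(+)"] sum.cong refl)
      fix x assume "x \<in> P"
      then obtain k i where x: "x = (k,i)" and k: "k < n" "i < ns!k" "0 < ns!k" using PM pos by (cases x) auto
      have "e * (eu k i 0 * fk k * eu k 0 i) = (e * eu k i 0) * fk k * eu k 0 i" by (simp add: mult.assoc)
      also have "\<dots> = eu k i 0 * (fk k * eu k 0 0) * fk k * eu k 0 i" using eE k by (simp add: mult.assoc)
      also have "\<dots> = eu k i 0 * fk k * eu k 0 i" using fkc fkfk k by (simp add: mult.assoc)
      finally show "e * (case x of (k,i) \<Rightarrow> eu k i 0 * fk k * eu k 0 i) = (case x of (k,i) \<Rightarrow> eu k i 0 * fk k * eu k 0 i)"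
        using x by simp
    qed
    also have "\<dots> = e" unfolding e_def by (simp add: case_prod_unfold)
    finally show ?thesis .
  qed
  have ey: "e * y = y \<and> y * e = y" if y: "y \<in> Y" for y
  proof
    have "e * (u * y) = (\<Sum>x\<in>P. (case x of (k,i) \<Rightarrow> e * eu k i i * y))"
      unfolding u_def by (simp add: sum_distrib_left sum_distrib_right case_prod_unfold mult.assoc)
    also have "\<dots> = (\<Sum>x\<in>P. (case x of (k,i) \<Rightarrow> eu k i i * y))"
    proof (intro sum.cong refl)
      fix x assume "x \<in> P"
      then obtain k i where x: "x = (k,i)" and k: "k < n" "i < ns!k" "0 < ns!k" using PM pos by (cases x) auto
      have "e * eu k i i * y = eu k i 0 * (fk k * (eu k 0 i * y))" using eE k by (simp add: mult.assoc)
      also have "\<dots> = (eu k i 0 * eu k 0 i) * y" using fkL k y by (simp add: mult.assoc)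
      also have "\<dots> = eu k i i * y" using k by (simp add: eu_mult)
      finally show "(case x of (k,i) \<Rightarrow> e * eu k i i * y) = (case x of (k,i) \<Rightarrow> eu k i i * y)" using x by simp
    qed
    also have "\<dots> = u * y" unfolding u_def by (simp add: sum_distrib_right case_prod_unfold)
    finally have 1: "e * (u * y) = u * y" .
    have "e * (v * y) = ((\<Sum>(k,i)\<in>P. eu k i 0 * fk k * eu k 0 i) * v) * y + f0 * (v * y)"
      unfolding e_def by (simp add: distrib_right mult.assoc)
    then have 2: "e * (v * y) = v * y" using Sv f0L y by simp
    have "y = u * y + v * y" unfolding v_def by (simp add: algebra_simps)
    then show "e * y = y" using 1 2 by (metis distrib_left)
    have "(y * u) * e = (\<Sum>x\<in>P. (case x of (k,i) \<Rightarrow> y * (eu k i i * e)))"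
      unfolding u_def by (simp add: sum_distrib_left sum_distrib_right case_prod_unfold mult.assoc)
    also have "\<dots> = (\<Sum>x\<in>P. (case x of (k,i) \<Rightarrow> y * eu k i i))"
    proof (intro sum.cong refl)
      fix x assume "x \<in> P"
      then obtain k i where x: "x = (k,i)" and k: "k < n" "i < ns!k" "0 < ns!k" using PM pos by (cases x) auto
      have "y * (eu k i i * e) = ((y * eu k i 0) * fk k) * eu k 0 i" using eE k by (simp add: mult.assoc)
      also have "\<dots> = y * (eu k i 0 * eu k 0 i)" using fkR k y by (simp add: mult.assoc)
      also have "\<dots> = y * eu k i i" using k by (simp add: eu_mult)
      finally show "(case x of (k,i) \<Rightarrow> y * (eu k i i * e)) = (case x of (k,i) \<Rightarrow> y * eu k i i)" using x by simp
    qed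
    also have "\<dots> = y * u" unfolding u_def by (simp add: sum_distrib_left case_prod_unfold)
    finally have 3: "(y * u) * e = y * u" .
    have "(y * v) * e = y * (v * (\<Sum>(k,i)\<in>P. eu k i 0 * fk k * eu k 0 i)) + (y * v) * f0"
      unfolding e_def by (simp add: distrib_left mult.assoc)
    then have 4: "(y * v) * e = y * v" using vS f0R y by simp
    have "y = y * u + y * v" unfolding v_def by (simp add: algebra_simps)
    then show "y * e = y" using 3 4 by (metis distrib_right)
  qed
  have "Y \<subseteq> {e * j * e | j. j \<in> J}"
  proof
    fix y assume y: "y \<in> Y"
    then have "y = e * y * e" using ey by simp
    then show "y \<in> {e * j * e | j. j \<in> J}" using y YJ by blast
  qed
  then show "\<exists>e\<in>J. e * e = e \<and> Y \<subseteq> {e * j * e | j. j \<in> J} \<and> (\<forall>t\<in>T. e * t = t * e)"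
    using eJ ee commT by blast
qed

end
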